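(* Suppose $g\in\mathcal{B}\setminus\mathcal{B}_0$. Then there exist $\delta\in(0,\pi/8)$, an increasing sequence $(r_n)_n$ in $(0,1)$ with $\lim_{n\to\infty}r_n=1$, and a sequence $(t_n)_n$ in $[0,2\pi)$ such that for every $n\in\mathbb{N}$ and every $t\in[-\delta(1-r_n),\delta(1-r_n)]$, $$(1-r_n)\,|g'(r_ne^{i(t_n+t)})|\ge\delta.$$
   Context: The Bloch space $\mathcal{B}$ consists of analytic $f$ on the unit disk $\mathbb{D}$ with $\sup_{z\in\mathbb{D}}(1-|z|^2)|f'(z)|<\infty$, and the little Bloch space $\mathcal{B}_0$ of those with $\lim_{|z|\to1^-}(1-|z|^2)|f'(z)|=0$. *)

theory Defs
  imports "HOL-Complex_Analysis.Complex_Analysis"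
begin

definition bloch :: "(complex \<Rightarrow> complex) set" where
  "bloch = {f. f holomorphic_on ball 0 1 \<and>
     bdd_above ((\<lambda>z. (1 - (cmod z)\<^sup>2) * cmod (deriv f z)) ` ball 0 1)}"

definition little_bloch :: "(complex \<Rightarrow> complex) set" where
  "little_bloch = {f. f holomorphic_on ball 0 1 \<and>
     (\<forall>\<epsilon>>0. \<exists>\<rho><1. \<forall>z. \<rho> < cmod z \<and> cmod z < 1 \<longrightarrow>
        (1 - (cmod z)\<^sup>2) * cmod (deriv f z) < \<epsilon>)}"

end

theory Submission
  imports Defs
begin

lemma aux: "(a::real) \<noteq> 0 \<Longrightarrow> c/a^2*(d*a) = c*d/a"
  by (simp add: power2_eq_square)

lemma d1_bound:
  assumes M: "\<And>x. x \<in> ball 0 1 \<Longrightarrow> (1 - (cmod x)^2) * cmod (deriv g x) \<le> M"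
  and x: "cmod x < 1"
  shows "cmod (deriv g x) \<le> M / (1 - cmod x)"
proof -
  have "(cmod x)^2 \<le> cmod x" using x by (simp add: power2_eq_square mult_left_le_one_le)
  hence "(1 - cmod x) * cmod (deriv g x) \<le> (1 - (cmod x)^2) * cmod (deriv g x)"
    by (intro mult_right_mono) auto
  also have "\<dots> \<le> M" using M x by simp
  finally show ?thesis using x by (simp add: pos_le_divide_eq mult.commute)
qed

lemma d2_bound:
  assumes hol: "g holomorphic_on ball 0 1"
  and M: "\<And>x. x \<in> ball 0 1 \<Longrightarrow> (1 - (cmod x)^2) * cmod (deriv g x) \<le> M"
  and r: "0 < r" "r < 1" and z: "cmod z = r" and w: "w \<in> ball z ((1-r)/4)"
  shows "cmod (deriv (deriv g) w) \<le> 8*M/(1-r)^2"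
proof -
  define \<rho> where "\<rho> = (1-r)/4"
  have \<rho>: "\<rho> > 0" using r by (simp add: \<rho>_def)
  have M0: "M \<ge> 0" using M[of 0] norm_ge_zero[of "deriv g 0"] by (simp del: norm_ge_zero)
  have hd: "deriv g holomorphic_on ball 0 1" by (rule holomorphic_deriv[OF hol]) simp
  have wz: "cmod (w - z) < \<rho>" using w by (simp add: \<rho>_def dist_norm norm_minus_commute)
  have near: "cmod x \<le> r + (1-r)/2" if "x \<in> cball w \<rho>" for x
  proof -
    have "cmod (x - w) \<le> \<rho>" using that by (simp add: dist_norm norm_minus_commute)
    moreover have "cmod x \<le> cmod z + cmod (x - w) + cmod (w - z)"
    proof -
      have "cmod x \<le> cmod z + cmod (x - z)" by (rule norm_triangle_sub)
      moreover have "cmod (x - z) \<le> cmod (x - w) + cmod (w - z)"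
        using norm_triangle_ineq[of "x - w" "w - z"] by simp
      ultimately show ?thesis by simp
    qed
    ultimately show ?thesis using wz z \<rho>_def by linarith
  qed
  have sub: "cball w \<rho> \<subseteq> ball 0 1"
  proof
    fix x assume "x \<in> cball w \<rho>"
    from near[OF this] r have "cmod x < 1" by argo
    thus "x \<in> ball 0 1" by simp
  qed
  have "cmod ((deriv ^^ 1) (deriv g) w) \<le> fact 1 * (2*M/(1-r)) / \<rho>^1"
  proof (rule Cauchy_inequality)
    show "deriv g holomorphic_on ball w \<rho>"
      using hd sub ball_subset_cball holomorphic_on_subset by blast
    show "continuous_on (cball w \<rho>) (deriv g)"
      using hd sub holomorphic_on_imp_continuous_on holomorphic_on_subset by blast
    show "0 < \<rho>" by (rule \<rho>)
    fix x assume "cmod (w - x) = \<rho>"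
    hence xc: "x \<in> cball w \<rho>" by (simp add: dist_norm)
    have nx: "cmod x \<le> r + (1-r)/2" by (rule near[OF xc])
    hence x1: "cmod x < 1" using r by argo
    have "cmod (deriv g x) \<le> M / (1 - cmod x)" by (rule d1_bound[OF M x1])
    also have "\<dots> \<le> M / ((1-r)/2)"
    proof -
      have b: "(1-r)/2 \<le> 1 - cmod x" using nx by argo
      have p: "0 < (1-r)/2" using r by simp
      have "0 < (1 - cmod x) * ((1-r)/2)" using b p by (intro mult_pos_pos) argo+
      thus ?thesis using divide_left_mono[OF b M0] by blast
    qed
    also have "\<dots> = 2*M/(1-r)" by simp
    finally show "cmod (deriv g x) \<le> 2*M/(1-r)" .
  qed
  also have "\<dots> = 8*M/(1-r)^2" by (simp add: \<rho>_def power2_eq_square)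
  finally show ?thesis by simp
qed

lemma d1_diff:
  assumes hol: "g holomorphic_on ball 0 1"
  and M: "\<And>x. x \<in> ball 0 1 \<Longrightarrow> (1 - (cmod x)^2) * cmod (deriv g x) \<le> M"
  and r: "0 < r" "r < 1" and z: "cmod z = r" and w: "cmod (w - z) \<le> d * (1 - r)"
  and d: "0 \<le> d" "d < 1/4"
  shows "cmod (deriv g w - deriv g z) \<le> 8*M*d/(1-r)"
proof -
  define S where "S = ball z ((1-r)/4)"
  have hd: "deriv g holomorphic_on ball 0 1" by (rule holomorphic_deriv[OF hol]) simp
  have Ssub: "S \<subseteq> ball 0 1"
  proof
    fix x assume "x \<in> S"
    hence "cmod (x - z) < (1-r)/4" by (simp add: S_def dist_norm norm_minus_commute)
    moreover have "cmod x \<le> cmod z + cmod (x - z)" by (metis norm_triangle_sub)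
    ultimately show "x \<in> ball 0 1" using z r by simp
  qed
  have "d * (1 - r) < (1/4) * (1 - r)" using d r by (intro mult_strict_right_mono) auto
  hence "cmod (z - w) < (1-r)/4" using w by (simp add: norm_minus_commute)
  hence wS: "w \<in> S" unfolding S_def by (simp add: dist_norm)
  have zS: "z \<in> S" using r by (simp add: S_def)
  have "cmod (deriv g w - deriv g z) \<le> 8*M/(1-r)^2 * cmod (w - z)"
  proof (rule field_differentiable_bound[where f="deriv g" and f'="deriv (deriv g)" and S=S])
    show "convex S" by (simp add: S_def)
    fix x assume xS: "x \<in> S"
    have "deriv g field_differentiable at x"
      using hd Ssub xS holomorphic_on_imp_differentiable_at by blast
    thus "(deriv g has_field_derivative deriv (deriv g) x) (at x within S)"
      using DERIV_deriv_iff_field_differentiable has_field_derivative_at_within by blast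
    show "cmod (deriv (deriv g) x) \<le> 8*M/(1-r)^2"
    proof -
      have xb: "x \<in> ball z ((1-r)/4)" using xS by (simp add: S_def)
      show ?thesis by (rule d2_bound[OF hol M r z xb])
    qed
  qed (rule wS, rule zS)
  also have "\<dots> \<le> 8*M/(1-r)^2 * (d * (1-r))"
  proof (rule mult_left_mono[OF w])
    have "M \<ge> 0" using M[of 0] norm_ge_zero[of "deriv g 0"] by (simp del: norm_ge_zero)
    thus "0 \<le> 8*M/(1-r)^2" by simp
  qed
  also have "\<dots> = 8*M*d/(1-r)"
  proof -
    have "1 - r \<noteq> 0" using r by simp
    thus ?thesis by (rule aux)
  qed
  finally show ?thesis .
qed


lemma cis_minus_one: "cmod (cis t - 1) \<le> \<bar>t\<bar>"
proof -
  have "(cmod (cis t - 1))^2 = (cos t - 1)^2 + (sin t)^2"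
    by (simp add: cmod_power2)
  also have "\<dots> = 2 - 2 * cos t" by (simp add: power2_diff sin_squared_eq)
  also have "\<dots> = 4 * (sin (t/2))^2" using cos_double_sin[of "t/2"] by simp
  also have "\<dots> \<le> 4 * (t/2)^2"
    using abs_sin_x_le_abs_x[of "t/2"]
    by (metis abs_ge_zero mult_left_mono power2_abs power_mono zero_le_numeral)
  also have "\<dots> = t^2" by (simp add: power2_eq_square)
  finally show ?thesis using abs_le_square_iff by (metis abs_norm_cancel)
qed

theorem lemma5p4:
  fixes g :: "complex \<Rightarrow> complex"
  assumes "g \<in> bloch" and "g \<notin> little_bloch"
  shows "\<exists>(\<delta>::real) (r::nat \<Rightarrow> real) (tt::nat \<Rightarrow> real).
           0 < \<delta> \<and> \<delta> < pi / 8 \<and>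
           strict_mono r \<and> (\<forall>n. 0 < r n \<and> r n < 1) \<and> r \<longlonglongrightarrow> 1 \<and>
           (\<forall>n. 0 \<le> tt n \<and> tt n < 2 * pi) \<and>
           (\<forall>n. \<forall>t. - \<delta> * (1 - r n) \<le> t \<and> t \<le> \<delta> * (1 - r n) \<longrightarrow>
              (1 - r n) * cmod (deriv g (complex_of_real (r n) * cis (tt n + t))) \<ge> \<delta>)"
proof -
  have hol: "g holomorphic_on ball 0 1" and bdd:
    "bdd_above ((\<lambda>z. (1 - (cmod z)\<^sup>2) * cmod (deriv g z)) ` ball 0 1)"
    using assms(1) by (auto simp: bloch_def)
  obtain M where M': "\<forall>x\<in>ball 0 1. (1 - (cmod x)^2) * cmod (deriv g x) \<le> M"
    using bdd unfolding bdd_above_def by auto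
  hence M: "\<And>x. x \<in> ball 0 1 \<Longrightarrow> (1 - (cmod x)^2) * cmod (deriv g x) \<le> M" by blast
  have M0: "0 \<le> M" using M[of 0] norm_ge_zero[of "deriv g 0"] by (simp del: norm_ge_zero)
  obtain \<epsilon> where \<epsilon>: "\<epsilon> > 0"
    and ex': "\<forall>\<rho>. 1 \<le> \<rho> \<or> (\<exists>z. \<rho> < cmod z \<and> cmod z < 1 \<and> \<epsilon> \<le> (1 - (cmod z)\<^sup>2) * cmod (deriv g z))"
    using assms(2) hol unfolding little_bloch_def by (auto simp: not_less)
  have ex: "\<And>\<rho>. \<rho> < 1 \<Longrightarrow> \<exists>z. \<rho> < cmod z \<and> cmod z < 1 \<and> \<epsilon> \<le> (1 - (cmod z)\<^sup>2) * cmod (deriv g z)"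
    using ex' not_le by blast
  define P where "P = (\<lambda>\<rho>. SOME z. \<rho> < cmod z \<and> cmod z < 1 \<and> \<epsilon> \<le> (1 - (cmod z)\<^sup>2) * cmod (deriv g z))"
  have P: "\<rho> < cmod (P \<rho>) \<and> cmod (P \<rho>) < 1 \<and> \<epsilon> \<le> (1 - (cmod (P \<rho>))\<^sup>2) * cmod (deriv g (P \<rho>))"
    if "\<rho> < 1" for \<rho>
    unfolding P_def by (rule someI_ex[OF ex[OF that]])
  define zs where "zs = rec_nat (P 0) (\<lambda>n z. P (max (cmod z) (1 + - inverse (real (Suc (Suc n))))))"
  have zs0: "zs 0 = P 0" by (simp add: zs_def)
  have zsS: "zs (Suc n) = P (max (cmod (zs n)) (1 + - inverse (real (Suc (Suc n)))))" for n
    by (simp add: zs_def)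
  have Q: "cmod (zs n) < 1 \<and> \<epsilon> \<le> (1 - (cmod (zs n))\<^sup>2) * cmod (deriv g (zs n))
      \<and> 1 + - inverse (real (Suc n)) < cmod (zs n)" for n
  proof (induction n)
    case 0
    show ?case using P[of 0] by (simp add: zs0)
  next
    case (Suc n)
    have "max (cmod (zs n)) (1 + - inverse (real (Suc (Suc n)))) < 1"
      using Suc by simp
    from P[OF this] show ?case unfolding zsS[of n] by simp
  qed
  define r where "r = (\<lambda>n. cmod (zs n))"
  define tt where "tt = (\<lambda>n. Arg2pi (zs n))"
  have inc: "r n < r (Suc n)" for n
  proof -
    have "max (cmod (zs n)) (1 + - inverse (real (Suc (Suc n)))) < 1"
      using Q[of n] by simp
    from P[OF this] show ?thesis unfolding r_def zsS[of n] by simp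
  qed
  have smono: "strict_mono r" by (rule strict_monoI_Suc) (rule inc)
  have r01: "0 < r n \<and> r n < 1" for n
  proof -
    have "0 \<le> 1 + - inverse (real (Suc n))" by (simp add: field_simps)
    thus ?thesis using Q[of n] unfolding r_def by linarith
  qed
  have lim: "r \<longlonglongrightarrow> 1"
  proof (rule tendsto_sandwich[OF _ _ LIMSEQ_inverse_real_of_nat_add_minus[of 1] tendsto_const[of 1]])
    show "\<forall>\<^sub>F n in sequentially. 1 + - inverse (real (Suc n)) \<le> r n"
      using Q unfolding r_def by (intro always_eventually allI less_imp_le) blast
    show "\<forall>\<^sub>F n in sequentially. r n \<le> 1"
      using r01 by (intro always_eventually allI less_imp_le) blast
  qed
  have tt: "0 \<le> tt n \<and> tt n < 2 * pi" for n using Arg2pi[of "zs n"] by (simp add: tt_def)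
  have zrep: "zs n = complex_of_real (r n) * cis (tt n)" for n
    using Arg2pi[of "zs n"] unfolding is_Arg_def tt_def r_def by (simp add: cis_conv_exp)
  define \<delta> where "\<delta> = min (1/8) (\<epsilon> / (2 * (1 + 8*M)))"
  have dpos: "0 < \<delta>" using \<epsilon> M0 by (simp add: \<delta>_def)
  have d18: "\<delta> \<le> 1/8" unfolding \<delta>_def by (rule min.cobounded1)
  have dpi: "\<delta> < pi / 8" using d18 pi_gt3 by simp
  have deps: "\<delta> * (2 * (1 + 8*M)) \<le> \<epsilon>"
  proof -
    have "\<delta> \<le> \<epsilon> / (2 * (1 + 8*M))" unfolding \<delta>_def by (rule min.cobounded2)
    thus ?thesis using M0 by (simp add: pos_le_divide_eq)
  qed
  have main: "(1 - r n) * cmod (deriv g (complex_of_real (r n) * cis (tt n + t))) \<ge> \<delta>"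
    if t: "- \<delta> * (1 - r n) \<le> t" "t \<le> \<delta> * (1 - r n)" for n t
  proof -
    define z where "z = zs n"
    define w where "w = complex_of_real (r n) * cis (tt n + t)"
    have rn: "0 < r n" "r n < 1" using r01[of n] by auto
    have zr: "cmod z = r n" by (simp add: z_def r_def)
    have "w - z = complex_of_real (r n) * cis (tt n) * (cis t - 1)"
      unfolding w_def z_def zrep[of n] by (simp add: cis_mult[symmetric] algebra_simps)
    hence "cmod (w - z) = r n * cmod (cis t - 1)"
      using rn by (simp add: norm_mult)
    also have "\<dots> \<le> 1 * \<bar>t\<bar>"
      using rn cis_minus_one[of t] by (intro mult_mono) auto
    also have "\<dots> \<le> \<delta> * (1 - r n)" using t by simp
    finally have wz: "cmod (w - z) \<le> \<delta> * (1 - r n)" .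
    have dd: "cmod (deriv g w - deriv g z) \<le> 8*M*\<delta>/(1 - r n)"
      by (rule d1_diff[OF hol M rn zr wz]) (use dpos d18 in auto)
    have q: "\<epsilon> \<le> (1 - (r n)\<^sup>2) * cmod (deriv g z)" using Q[of n] by (simp add: z_def r_def)
    have sq: "0 \<le> (1 - r n) * (1 - r n)" by simp
    have ex2: "(1 - r n) * (1 - r n) = 1 - 2 * r n + r n * r n" by algebra
    have "(1 - (r n)\<^sup>2) \<le> 2 * (1 - r n)" unfolding power2_eq_square using sq ex2 by argo
    hence "(1 - (r n)\<^sup>2) * cmod (deriv g z) \<le> 2 * (1 - r n) * cmod (deriv g z)"
      by (intro mult_right_mono) auto
    with q have "\<epsilon> \<le> 2 * (1 - r n) * cmod (deriv g z)" by (rule order_trans)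
    moreover have "2 * (1 - r n) * cmod (deriv g z) = 2 * ((1 - r n) * cmod (deriv g z))"
      by (simp only: mult.assoc)
    ultimately have A: "\<epsilon> / 2 \<le> (1 - r n) * cmod (deriv g z)" by argo
    have "(1 - r n) * cmod (deriv g w - deriv g z) \<le> (1 - r n) * (8*M*\<delta>/(1 - r n))"
      using rn dd by (intro mult_left_mono) auto
    also have "\<dots> = 8*M*\<delta>" using rn by simp
    finally have D: "(1 - r n) * cmod (deriv g w - deriv g z) \<le> 8*M*\<delta>" .
    have tri: "cmod (deriv g z) - cmod (deriv g w - deriv g z) \<le> cmod (deriv g w)"
      using norm_triangle_ineq2[of "deriv g z" "deriv g z - deriv g w"]
      by (simp add: norm_minus_commute)
    have "(1 - r n) * (cmod (deriv g z) - cmod (deriv g w - deriv g z)) \<le> (1 - r n) * cmod (deriv g w)"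
      using rn tri by (intro mult_left_mono) auto
    hence E: "(1 - r n) * cmod (deriv g z) - (1 - r n) * cmod (deriv g w - deriv g z) \<le> (1 - r n) * cmod (deriv g w)"
      by (simp add: right_diff_distrib)
    have "\<delta> + 8*M*\<delta> \<le> \<epsilon> / 2" using deps by (simp add: algebra_simps)
    hence "\<delta> \<le> (1 - r n) * cmod (deriv g w)" using A D E by argo
    thus ?thesis by (simp add: w_def)
  qed
  show ?thesis
    by (rule exI[of _ \<delta>], rule exI[of _ r], rule exI[of _ tt])
       (use dpos dpi smono r01 lim tt main in blast)
qed

end
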